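(* Consider a game in which Constructor and Blocker alternately claim unclaimed edges of $K_n$ (with Constructor possibly subject to restrictions on which edges she may claim). Assume that Blocker always answers each move of Constructor by claiming an unclaimed edge with both endpoints in the connected component of Constructor's graph containing the edge Constructor just claimed, whenever such an unclaimed edge exists. If at the end of the game some connected component $C$ of Constructor's graph has $r$ vertices, then at least $$\frac{\binom{r}{2}-\lfloor r/2\rfloor}{2}$$ of the edges of $K_n$ between vertices of $C$ are not claimed by Constructor.
   Context: Constructor's graph is the graph on $V(K_n)$ whose edges are those claimed by Constructor. *)

theory Defs
  imports Complex_Main
begin

definition Kn_edges :: "nat \<Rightarrow> nat set set" where
  "Kn_edges n = {e. e \<subseteq> {..<n} \<and> card e = 2}"

definition component :: "nat \<Rightarrow> nat set set \<Rightarrow> nat \<Rightarrow> nat set" where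
  "component n E v = {w \<in> {..<n}. (\<lambda>x y. {x, y} \<in> E)\<^sup>*\<^sup>* v w}"

definition is_component :: "nat \<Rightarrow> nat set set \<Rightarrow> nat set \<Rightarrow> bool" where
  "is_component n E C \<longleftrightarrow> (\<exists>v<n. C = component n E v)"

text \<open>A play is a list of rounds: Constructor claims an edge, then Blocker claims
  an edge (Some e) or makes no move (None).\<close>
type_synonym round = "nat set \<times> nat set option"

definition cons_edges :: "round list \<Rightarrow> nat set set" where
  "cons_edges rs = fst ` set rs"

definition blk_edges :: "round list \<Rightarrow> nat set set" where
  "blk_edges rs = (\<Union>r \<in> set rs. set_option (snd r))"

definition claimed :: "round list \<Rightarrow> nat set set" where
  "claimed rs = cons_edges rs \<union> blk_edges rs"

definition legal_play :: "nat \<Rightarrow> round list \<Rightarrow> bool" where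
  "legal_play n rs \<longleftrightarrow> (\<forall>i<length rs.
     fst (rs ! i) \<in> Kn_edges n \<and> fst (rs ! i) \<notin> claimed (take i rs) \<and>
     (\<forall>e. snd (rs ! i) = Some e \<longrightarrow>
        e \<in> Kn_edges n \<and> e \<notin> claimed (take i rs) \<and> e \<noteq> fst (rs ! i)))"

definition blocker_follows_rule :: "nat \<Rightarrow> round list \<Rightarrow> bool" where
  "blocker_follows_rule n rs \<longleftrightarrow> (\<forall>i<length rs. \<forall>u \<in> fst (rs ! i).
     let K = component n (cons_edges (take i rs) \<union> {fst (rs ! i)}) u in
     (\<exists>e \<in> Kn_edges n. e \<subseteq> K \<and> e \<notin> claimed (take i rs) \<and> e \<noteq> fst (rs ! i)) \<longrightarrow>
     (\<exists>e. snd (rs ! i) = Some e \<and> e \<subseteq> K))"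

end

theory Submission imports Defs begin

definition reach :: "nat set set \<Rightarrow> nat \<Rightarrow> nat \<Rightarrow> bool" where
  "reach E = (\<lambda>x y. {x, y} \<in> E)\<^sup>*\<^sup>*"

lemma component_reach: "component n E v = {w \<in> {..<n}. reach E v w}"
  unfolding component_def reach_def by simp

lemma reach_refl[simp]: "reach E a a"
  unfolding reach_def by simp

lemma reach_edge: "{a, b} \<in> E \<Longrightarrow> reach E a b"
  unfolding reach_def by (rule r_into_rtranclp)

lemma reach_trans: "reach E a b \<Longrightarrow> reach E b c \<Longrightarrow> reach E a c"
  unfolding reach_def by (rule rtranclp_trans)

lemma reach_sym: "reach E a b \<Longrightarrow> reach E b a"
  unfolding reach_def
proof (induction rule: rtranclp_induct)
  case base then show ?case by simp
next
  case (step b c)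
  then have "{c, b} \<in> E" by (simp add: insert_commute)
  then show ?case using step(3) by (rule converse_rtranclp_into_rtranclp)
qed

lemma reach_mono: "E \<subseteq> F \<Longrightarrow> reach E a b \<Longrightarrow> reach F a b"
  unfolding reach_def
proof -
  assume s: "E \<subseteq> F" and r: "(\<lambda>x y. {x, y} \<in> E)\<^sup>*\<^sup>* a b"
  from r show "(\<lambda>x y. {x, y} \<in> F)\<^sup>*\<^sup>* a b"
    by (induction rule: rtranclp_induct) (use s in \<open>auto intro: rtranclp.rtrancl_into_rtrancl\<close>)
qed

lemma reach_insert_D:
  assumes "reach (insert {x, y} E) a b"
  shows "reach E a b \<or> (reach E a x \<and> reach E y b) \<or> (reach E a y \<and> reach E x b)"
  using assms unfolding reach_def[of "insert {x,y} E"]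
proof (induction rule: rtranclp_induct)
  case base then show ?case by simp
next
  case (step b c)
  have e: "{b, c} = {x, y} \<or> {b, c} \<in> E" using step(2) by simp
  show ?case
  proof (cases "{b, c} \<in> E")
    case True
    then have "reach E b c" by (rule reach_edge)
    then show ?thesis using step(3) by (meson reach_trans)
  next
    case False
    then have "{b, c} = {x, y}" using e by simp
    then have bc: "(b = x \<and> c = y) \<or> (b = y \<and> c = x)" by (auto simp: doubleton_eq_iff)
    then show ?thesis using step(3) by (meson reach_trans reach_sym reach_refl)
  qed
qed

lemma reach_insert:
  "reach (insert {x, y} E) a b \<longleftrightarrow>
   reach E a b \<or> (reach E a x \<and> reach E y b) \<or> (reach E a y \<and> reach E x b)"
proof
  assume "reach (insert {x, y} E) a b" then show "reach E a b \<or> (reach E a x \<and> reach E y b) \<or> (reach E a y \<and> reach E x b)"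
    by (rule reach_insert_D)
next
  have s: "E \<subseteq> insert {x,y} E" by auto
  have xy: "reach (insert {x, y} E) x y" "reach (insert {x, y} E) y x"
    by (auto intro: reach_edge simp: insert_commute)
  assume "reach E a b \<or> (reach E a x \<and> reach E y b) \<or> (reach E a y \<and> reach E x b)"
  then show "reach (insert {x, y} E) a b"
    using reach_mono[OF s] xy by (meson reach_trans)
qed

lemma parity0: "even ((k::nat) * (k - 1) div 2 + k div 2)"
proof (cases "even k")
  case True
  then obtain m where k: "k = 2 * m" by blast
  have "k * (k - 1) div 2 + k div 2 = 2 * (m * m)" unfolding k by (cases m) (auto simp: algebra_simps)
  then show ?thesis by simp
next
  case False
  then obtain m where k: "k = 2 * m + 1" using oddE by blast
  have "k * (k - 1) div 2 + k div 2 = 2 * (m * m) + 2 * m" unfolding k by (simp add: algebra_simps)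
  then show ?thesis by simp
qed

lemma parity: "even ((k choose 2) + k div 2)"
  unfolding choose_two by (rule parity0)


lemma parity_arith:
  fixes a b C d :: nat
  assumes "a + b = C" "int a - int b \<le> int d + 1" "even (C + d)"
  shows "int a - int b \<le> int d"
  using assms by presburger

lemma div2_add: "(a::nat) div 2 + b div 2 \<le> (a + b) div 2"
  by linarith

definition inside :: "nat set set \<Rightarrow> nat set \<Rightarrow> nat set set" where
  "inside E K = {e \<in> E. e \<subseteq> K}"

definition Inv :: "nat \<Rightarrow> nat set set \<Rightarrow> nat set set \<Rightarrow> bool" where
  "Inv n E B \<longleftrightarrow> (\<forall>v<n. int (card (inside E (component n E v)))
      - int (card (inside B (component n E v))) \<le> int (card (component n E v) div 2))"

lemma finite_Kn: "finite (Kn_edges n)"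
proof -
  have "Kn_edges n \<subseteq> Pow {..<n}" unfolding Kn_edges_def by auto
  then show ?thesis by (rule finite_subset) simp
qed

lemma Kn_card:
  assumes "K \<subseteq> {..<n}"
  shows "card {e \<in> Kn_edges n. e \<subseteq> K} = card K choose 2"
proof -
  have "{e \<in> Kn_edges n. e \<subseteq> K} = {e. e \<subseteq> K \<and> card e = 2}"
    using assms unfolding Kn_edges_def by auto
  moreover have "finite K" using assms finite_subset by blast
  ultimately show ?thesis by (simp add: n_subsets)
qed

lemma edge_Kn:
  assumes "e \<in> Kn_edges n"
  obtains x y where "e = {x, y}" "x \<noteq> y" "x < n" "y < n"
proof -
  from assms have "card e = 2" "e \<subseteq> {..<n}" unfolding Kn_edges_def by auto
  then obtain x y where "e = {x, y}" "x \<noteq> y" by (auto simp: card_2_iff)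
  then show ?thesis using that \<open>e \<subseteq> {..<n}\<close> by auto
qed

lemma component_sub: "component n E v \<subseteq> {..<n}"
  unfolding component_def by auto

lemma comp_eq: "reach E x y \<Longrightarrow> component n E x = component n E y"
  unfolding component_reach by (auto intro: reach_trans reach_sym)

lemma comp_mem: "w < n \<Longrightarrow> w \<in> component n E v \<longleftrightarrow> reach E v w"
  unfolding component_reach by auto

lemma finite_inside: "E \<subseteq> Kn_edges n \<Longrightarrow> finite (inside E K)"
  unfolding inside_def using finite_Kn finite_subset by (metis (no_types, lifting) mem_Collect_eq subsetI subset_iff)

lemma comp_closed:
  assumes "E \<subseteq> Kn_edges n" "p \<in> component n E w" "{p, q} \<in> E"
  shows "q \<in> component n E w"
proof -
  have "{p, q} \<in> Kn_edges n" using assms by auto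
  then have "q < n" unfolding Kn_edges_def by auto
  moreover have "reach E w p" using assms(2) unfolding component_reach by auto
  moreover have "reach E p q" using assms(3) by (rule reach_edge)
  ultimately show ?thesis unfolding component_reach by (auto intro: reach_trans)
qed


lemma step:
  assumes EK: "E \<subseteq> Kn_edges n" and BK: "B \<subseteq> Kn_edges n" and disj: "E \<inter> B = {}"
    and cK: "c \<in> Kn_edges n" and cn: "c \<notin> E \<union> B"
    and sK: "\<And>e. s = Some e \<Longrightarrow> e \<in> Kn_edges n \<and> e \<notin> E \<union> B \<and> e \<noteq> c"
    and rl: "\<forall>u\<in>c. let K = component n (insert c E) u in
       (\<exists>e\<in>Kn_edges n. e \<subseteq> K \<and> e \<notin> E \<union> B \<and> e \<noteq> c) \<longrightarrow> (\<exists>e. s = Some e \<and> e \<subseteq> K)"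
    and inv: "Inv n E B"
  shows "Inv n (insert c E) (B \<union> set_option s)"
  unfolding Inv_def
proof (intro allI impI)
  fix v assume vn: "v < n"
  obtain x y where c: "c = {x, y}" "x \<noteq> y" "x < n" "y < n" using cK by (rule edge_Kn)
  define E' where "E' = insert c E"
  define B' where "B' = B \<union> set_option s"
  define K' where "K' = component n E' v"
  have E'K: "E' \<subseteq> Kn_edges n" using EK cK E'_def by auto
  have B'K: "B' \<subseteq> Kn_edges n" using BK sK B'_def by auto
  have BB': "inside B K' \<subseteq> inside B' K'" unfolding inside_def B'_def by auto
  have cardBB': "card (inside B K') \<le> card (inside B' K')"
    using BB' finite_inside[OF B'K] by (rule card_mono[rotated])
  have invv: "\<And>w. w < n \<Longrightarrow> int (card (inside E (component n E w)))
      - int (card (inside B (component n E w))) \<le> int (card (component n E w) div 2)"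
    using inv unfolding Inv_def by blast
  show "int (card (inside (insert c E) (component n (insert c E) v)))
      - int (card (inside (B \<union> set_option s) (component n (insert c E) v)))
      \<le> int (card (component n (insert c E) v) div 2)"
  proof (cases "x \<in> K'")
    case False
    have "reach E' x y" unfolding E'_def c by (rule reach_edge) simp
    then have yK: "y \<notin> K'" using False c unfolding K'_def component_reach
      by (auto intro: reach_trans reach_sym)
    have nx: "\<not> reach E v x" using False c(3) reach_mono[of E E'] unfolding K'_def E'_def component_reach by auto
    have ny: "\<not> reach E v y" using yK c(4) reach_mono[of E E'] unfolding K'_def E'_def component_reach by auto
    have Keq: "K' = component n E v"
      unfolding K'_def E'_def c component_reach reach_insert using nx ny by auto
    have "inside E' K' = inside E K'" using False c unfolding inside_def E'_def by auto
    moreover have "int (card (inside E K')) - int (card (inside B K')) \<le> int (card K' div 2)"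
      using invv[OF vn] Keq by simp
    ultimately show ?thesis using cardBB'
      unfolding E'_def[symmetric] B'_def[symmetric] K'_def[symmetric] by simp
  next
    case True
    then have "reach E' v x" unfolding K'_def component_reach by auto
    then have K'x: "K' = component n E' x" unfolding K'_def by (rule comp_eq)
    define A where "A = component n E x"
    define Bc where "Bc = component n E y"
    have K'AB: "K' = A \<union> Bc"
      unfolding K'x A_def Bc_def E'_def c component_reach reach_insert by auto
    have xA: "x \<in> A" unfolding A_def component_reach using c by auto
    have yB: "y \<in> Bc" unfolding Bc_def component_reach using c by auto
    have cE: "c \<notin> inside E K'" using cn unfolding inside_def by auto
    have cK': "c \<subseteq> K'" using xA yB K'AB c by auto
    have ins: "inside E' K' = insert c (inside E K')" using cK' unfolding inside_def E'_def by auto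
    have pre: "int (card (inside E' K')) - int (card (inside B K')) \<le> int (card K' div 2) + 1"
    proof (cases "y \<in> A")
      case True
      then have "reach E x y" unfolding A_def component_reach by auto
      then have "Bc = A" unfolding A_def Bc_def by (rule comp_eq[symmetric])
      then have KA: "K' = A" using K'AB by auto
      have "card (inside E' K') = Suc (card (inside E K'))"
        using ins cE finite_inside[OF EK] by simp
      moreover have "int (card (inside E K')) - int (card (inside B K')) \<le> int (card K' div 2)"
        using invv[OF c(3)] unfolding A_def[symmetric] KA[symmetric] .
      ultimately show ?thesis by linarith
    next
      case False
      have disjAB: "A \<inter> Bc = {}"
      proof (rule ccontr)
        assume "A \<inter> Bc \<noteq> {}"
        then obtain w where "w \<in> A" "w \<in> Bc" by auto
        then have r1: "reach E x w" and r2: "reach E y w" unfolding A_def Bc_def component_reach by simp_all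
        have "reach E x y" using reach_trans[OF r1 reach_sym[OF r2]] .
        then have "y \<in> A" using c(4) unfolding A_def component_reach by simp
        then show False using \<open>y \<notin> A\<close> by contradiction
      qed
      have splitE: "inside E K' = inside E A \<union> inside E Bc"
      proof
        show "inside E A \<union> inside E Bc \<subseteq> inside E K'" unfolding inside_def K'AB by auto
        show "inside E K' \<subseteq> inside E A \<union> inside E Bc"
        proof
          fix e assume e: "e \<in> inside E K'"
          then have eE: "e \<in> E" and eK: "e \<subseteq> A \<union> Bc" unfolding inside_def K'AB by auto
          obtain p q where pq: "e = {p, q}" "p \<noteq> q" "p < n" "q < n" using eE EK by (meson edge_Kn subsetD)
          have pq': "{p, q} \<in> E" "{q, p} \<in> E" using eE pq by (auto simp: insert_commute)
          have "p \<in> A \<Longrightarrow> q \<in> A" using comp_closed[OF EK _ pq'(1)] unfolding A_def by blast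
          moreover have "q \<in> A \<Longrightarrow> p \<in> A" using comp_closed[OF EK _ pq'(2)] unfolding A_def by blast
          ultimately show "e \<in> inside E A \<union> inside E Bc" using eE eK pq unfolding inside_def by auto
        qed
      qed
      have disjE: "inside E A \<inter> inside E Bc = {}"
      proof (rule ccontr)
        assume "inside E A \<inter> inside E Bc \<noteq> {}"
        then obtain e where "e \<in> E" "e \<subseteq> A" "e \<subseteq> Bc" unfolding inside_def by auto
        moreover obtain p q where "e = {p, q}" using \<open>e \<in> E\<close> EK by (meson edge_Kn subsetD)
        ultimately show False using disjAB by auto
      qed
      have cardE: "card (inside E K') = card (inside E A) + card (inside E Bc)"
        unfolding splitE using disjE finite_inside[OF EK] by (simp add: card_Un_disjoint)
      have disjB: "inside B A \<inter> inside B Bc = {}"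
      proof (rule ccontr)
        assume "inside B A \<inter> inside B Bc \<noteq> {}"
        then obtain e where "e \<in> B" "e \<subseteq> A" "e \<subseteq> Bc" unfolding inside_def by auto
        moreover obtain p q where "e = {p, q}" using \<open>e \<in> B\<close> BK by (meson edge_Kn subsetD)
        ultimately show False using disjAB by auto
      qed
      have "card (inside B A) + card (inside B Bc) = card (inside B A \<union> inside B Bc)"
        using disjB finite_inside[OF BK] by (simp add: card_Un_disjoint)
      also have "\<dots> \<le> card (inside B K')"
        by (rule card_mono) (use finite_inside[OF BK] in \<open>auto simp: inside_def K'AB\<close>)
      finally have cardB: "card (inside B A) + card (inside B Bc) \<le> card (inside B K')" .
      have fA: "finite A" "finite Bc" unfolding A_def Bc_def
        by (rule finite_subset[OF component_sub], simp)+
      have cardK: "card K' = card A + card Bc" unfolding K'AB using disjAB fA by (simp add: card_Un_disjoint)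
      have c1: "card (inside E' K') = Suc (card (inside E K'))"
        using ins cE finite_inside[OF EK] by simp
      have "card A div 2 + card Bc div 2 \<le> card K' div 2" unfolding cardK by (rule div2_add)
      then show ?thesis using invv[OF c(3)] invv[OF c(4)] c1 cardE cardB
        unfolding A_def[symmetric] Bc_def[symmetric] by linarith
    qed
    show ?thesis
    proof (cases "\<exists>e\<in>Kn_edges n. e \<subseteq> K' \<and> e \<notin> E \<union> B \<and> e \<noteq> c")
      case True
      have "x \<in> c" using c by simp
      then have "\<exists>e. s = Some e \<and> e \<subseteq> K'" using rl True unfolding K'x E'_def Let_def by blast
      then obtain e where es: "s = Some e" "e \<subseteq> K'" by blast
      then have "e \<notin> B" using sK by blast
      then have "insert e (inside B K') \<subseteq> inside B' K'" using es unfolding inside_def B'_def by auto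
      then have "card (insert e (inside B K')) \<le> card (inside B' K')"
        using finite_inside[OF B'K] by (rule card_mono[rotated])
      moreover have "card (insert e (inside B K')) = Suc (card (inside B K'))"
        using \<open>e \<notin> B\<close> finite_inside[OF BK] unfolding inside_def by simp
      ultimately show ?thesis using pre
        unfolding E'_def[symmetric] B'_def[symmetric] K'_def[symmetric] by linarith
    next
      case False
      have all: "{e \<in> Kn_edges n. e \<subseteq> K'} = inside E' K' \<union> inside B K'"
        using False E'K BK unfolding inside_def E'_def by auto
      have dj: "inside E' K' \<inter> inside B K' = {}" using disj cn unfolding inside_def E'_def by auto
      have "card (inside E' K') + card (inside B K') = card K' choose 2"
        using Kn_card[OF component_sub[of n E' v]] all dj finite_inside[OF E'K] finite_inside[OF BK]
        unfolding K'_def[symmetric] by (simp add: card_Un_disjoint)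
      then have "int (card (inside E' K')) - int (card (inside B K')) \<le> int (card K' div 2)"
        using pre parity by (rule parity_arith)
      then show ?thesis using cardBB'
        unfolding E'_def[symmetric] B'_def[symmetric] K'_def[symmetric] by linarith
    qed
  qed
qed


lemma cons_edges_snoc: "cons_edges (xs @ [r]) = insert (fst r) (cons_edges xs)"
  unfolding cons_edges_def by auto

lemma blk_edges_snoc: "blk_edges (xs @ [r]) = blk_edges xs \<union> set_option (snd r)"
  unfolding blk_edges_def by auto

lemma invariant_all:
  assumes lg: "legal_play n rs" and br: "blocker_follows_rule n rs"
  shows "i \<le> length rs \<Longrightarrow> cons_edges (take i rs) \<subseteq> Kn_edges n \<and> blk_edges (take i rs) \<subseteq> Kn_edges n
     \<and> cons_edges (take i rs) \<inter> blk_edges (take i rs) = {} \<and> Inv n (cons_edges (take i rs)) (blk_edges (take i rs))"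
proof (induction i)
  case 0
  have "Inv n {} {}" unfolding Inv_def inside_def by simp
  then show ?case by (simp add: cons_edges_def blk_edges_def)
next
  case (Suc i)
  then have il: "i < length rs" by simp
  define E where "E = cons_edges (take i rs)"
  define B where "B = blk_edges (take i rs)"
  define c where "c = fst (rs ! i)"
  define s where "s = snd (rs ! i)"
  have IH: "E \<subseteq> Kn_edges n" "B \<subseteq> Kn_edges n" "E \<inter> B = {}" "Inv n E B"
    using Suc.IH[OF less_imp_le[OF il]] unfolding E_def B_def by auto
  have cl: "claimed (take i rs) = E \<union> B" unfolding claimed_def E_def B_def by simp
  have L: "c \<in> Kn_edges n" "c \<notin> E \<union> B"
     "\<And>e. s = Some e \<Longrightarrow> e \<in> Kn_edges n \<and> e \<notin> E \<union> B \<and> e \<noteq> c"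
    using lg il unfolding legal_play_def cl[symmetric] c_def s_def by blast+
  have rl: "\<forall>u\<in>c. let K = component n (insert c E) u in
       (\<exists>e\<in>Kn_edges n. e \<subseteq> K \<and> e \<notin> E \<union> B \<and> e \<noteq> c) \<longrightarrow> (\<exists>e. s = Some e \<and> e \<subseteq> K)"
  proof -
    have r0: "\<forall>u\<in>fst (rs ! i). let K = component n (cons_edges (take i rs) \<union> {fst (rs ! i)}) u in
      (\<exists>e\<in>Kn_edges n. e \<subseteq> K \<and> e \<notin> claimed (take i rs) \<and> e \<noteq> fst (rs ! i)) \<longrightarrow>
      (\<exists>e. snd (rs ! i) = Some e \<and> e \<subseteq> K)"
      using br il unfolding blocker_follows_rule_def by blast
    then show ?thesis by (simp add: cl c_def s_def E_def)
  qed
  have inv': "Inv n (insert c E) (B \<union> set_option s)"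
    by (rule step[OF IH(1,2,3) L(1,2) L(3) rl IH(4)])
  have tk: "take (Suc i) rs = take i rs @ [rs ! i]" using il by (simp add: take_Suc_conv_app_nth)
  have ce: "cons_edges (take (Suc i) rs) = insert c E" unfolding tk cons_edges_snoc c_def E_def ..
  have be: "blk_edges (take (Suc i) rs) = B \<union> set_option s" unfolding tk blk_edges_snoc s_def B_def ..
  have "insert c E \<subseteq> Kn_edges n" using IH L by auto
  moreover have "B \<union> set_option s \<subseteq> Kn_edges n" using IH L by (cases s) auto
  moreover have "insert c E \<inter> (B \<union> set_option s) = {}" using IH L by (cases s) auto
  ultimately show ?case using inv' unfolding ce be by blast
qed

theorem lemma2p4:
  fixes n r :: nat and rs :: "round list" and C :: "nat set"
  assumes "legal_play n rs"
    and "blocker_follows_rule n rs"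
    and "is_component n (cons_edges rs) C"
    and "card C = r"
  shows "real (card {e \<in> Kn_edges n. e \<subseteq> C \<and> e \<notin> cons_edges rs})
           \<ge> (real (r choose 2) - real (r div 2)) / 2"
proof -
  define E where "E = cons_edges rs"
  define B where "B = blk_edges rs"
  have I: "E \<subseteq> Kn_edges n" "B \<subseteq> Kn_edges n" "E \<inter> B = {}" "Inv n E B"
    using invariant_all[OF assms(1,2), of "length rs"] unfolding E_def B_def by auto
  obtain v where v: "v < n" "C = component n E v" using assms(3) unfolding is_component_def E_def by blast
  define a where "a = card (inside E C)"
  define b where "b = card (inside B C)"
  have ab: "int a - int b \<le> int (r div 2)"
    using I(4) v assms(4) unfolding Inv_def a_def b_def by blast
  define S where "S = {e \<in> Kn_edges n. e \<subseteq> C}"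
  have Csub: "C \<subseteq> {..<n}" using v component_sub by blast
  have cS: "card S = r choose 2" unfolding S_def using Kn_card[OF Csub] assms(4) by simp
  have fS: "finite S" unfolding S_def using finite_Kn by simp
  have sub: "inside E C \<union> inside B C \<subseteq> S" using I unfolding inside_def S_def by auto
  have dj: "inside E C \<inter> inside B C = {}" using I(3) unfolding inside_def by auto
  have "a + b = card (inside E C \<union> inside B C)"
    unfolding a_def b_def using dj finite_inside[OF I(1)] finite_inside[OF I(2)] by (simp add: card_Un_disjoint)
  also have "\<dots> \<le> r choose 2" using card_mono[OF fS sub] cS by simp
  finally have abS: "a + b \<le> r choose 2" .
  have T: "{e \<in> Kn_edges n. e \<subseteq> C \<and> e \<notin> cons_edges rs} = S - inside E C"
    unfolding S_def inside_def E_def by auto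
  have subE: "inside E C \<subseteq> S" using sub by auto
  have cT: "card (S - inside E C) = (r choose 2) - a"
    unfolding a_def using card_Diff_subset[OF finite_subset[OF subE fS] subE] cS by simp
  have aS: "a \<le> r choose 2" using abS by simp
  have "real (card (S - inside E C)) = real (r choose 2) - real a" using cT aS by simp
  moreover have "real a - real b \<le> real (r div 2)" using ab by linarith
  moreover have "real a + real b \<le> real (r choose 2)" using abS by (simp flip: of_nat_add)
  ultimately have "real (r choose 2) - real (r div 2) \<le> 2 * real (card (S - inside E C))" by linarith
  then show ?thesis unfolding T by (simp add: field_simps)
qed

end
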